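(* Let $N\geq2$ and $1<\alpha<N$. There exists a constant $\xi=\xi(\alpha,N)>0$ such that every measurable set $E\subseteq\mathbb R^N$ with $|E|=\omega_N$ and $\delta(E)\geq2(\omega_N-\xi)$ satisfies \[ D(E)>\frac{\omega_N^2}{5^N}\Big(1-\frac1{2^{N-\alpha}}\Big)\,. \]
   Context: $B$ is the open unit ball centered at the origin, $\omega_N=|B|$, $B_x$ the open unit ball centered at $x$. For measurable $E$ of finite measure, $\mathfrak F(E)=\int_E\int_E|y-x|^{-(N-\alpha)}\,dy\,dx$, $D(E)=\mathfrak F(B)-\mathfrak F(E)$, $\delta(E)=\inf_{x\in\mathbb R^N}|B_x\Delta E|$. *)

theory Defs
  imports "HOL-Analysis.Analysis"
begin

text \<open>It is finite for sets of finite measure when alpha > 0; we take its real value.\<close>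
definition rieszF :: "real \<Rightarrow> (real ^ 'n :: finite) set \<Rightarrow> real" where
  "rieszF \<alpha> E = enn2real (\<integral>\<^sup>+ x. \<integral>\<^sup>+ y.
      ennreal (indicator E x * indicator E y * norm (y - x) powr (- (real CARD('n) - \<alpha>))) \<partial>lebesgue \<partial>lebesgue)"

definition deficit :: "real \<Rightarrow> (real ^ 'n :: finite) set \<Rightarrow> real" where
  "deficit \<alpha> E = rieszF \<alpha> (ball (0 :: real ^ 'n) 1) - rieszF \<alpha> E"

definition asym :: "(real ^ 'n :: finite) set \<Rightarrow> real" where
  "asym E = (INF x. measure lebesgue ((ball x 1 - E) \<union> (E - ball x 1)))"

end

theory Submission
  imports Defs
begin


lemma ennreal_term_le_suminf: "(f::nat \<Rightarrow> ennreal) k \<le> suminf f"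
  using sum_le_suminf[OF summableI, of "{k}" f] by simp

lemma kernel_pointwise:
  fixes z :: "'a::real_normed_vector" and s R :: real
  assumes s: "s > 0" and R: "R \<ge> 1"
  shows "ennreal (norm z powr (-s)) \<le> ennreal (R powr (-s)) + indicator (ball 0 R) z
     + (\<Sum>k. ennreal (2 powr ((real k + 1) * s)) * indicator (ball 0 (1 / 2 ^ k)) z)"
    (is "_ \<le> ?a + ?b + ?c")
proof -
  consider "z = 0" | "norm z \<ge> R" | "1 \<le> norm z" "norm z < R" | "0 < norm z" "norm z < 1"
    by force
  then show ?thesis
  proof cases
    case 1
    then show ?thesis by simp
  next
    case 2
    have "norm z powr (-s) \<le> R powr (-s)"
      using 2 R s by (intro powr_mono2') auto
    then have "ennreal (norm z powr (-s)) \<le> ?a" by (intro ennreal_leI)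
    also have "?a \<le> ?a + ?b + ?c" by (simp add: add.assoc)
    finally show ?thesis .
  next
    case 3
    have "norm z powr (-s) \<le> 1 powr (-s)"
      using 3 s by (intro powr_mono2') auto
    then have "norm z powr (-s) \<le> 1" by simp
    then have "ennreal (norm z powr (-s)) \<le> ?b" using 3 by (simp add: indicator_def)
    also have "?b \<le> ?a + ?b + ?c" by (simp add: add.commute add_increasing2)
    finally show ?thesis .
  next
    case 4
    define t where "t = - log 2 (norm z)"
    have t: "t > 0" using 4 by (simp add: t_def)
    have zt: "norm z = 2 powr (-t)" using 4 by (simp add: t_def)
    define k where "k = nat (ceiling t) - 1"
    have k1: "real k + 1 \<ge> t" using t unfolding k_def by (simp add: of_nat_diff) linarith
    have k2: "real k < t" using t unfolding k_def by (simp add: of_nat_diff) linarith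
    have "norm z powr (-s) = 2 powr (t * s)" using zt by (simp add: powr_powr)
    also have "\<dots> \<le> 2 powr ((real k + 1) * s)" using k1 s by (intro powr_mono) auto
    finally have A: "norm z powr (-s) \<le> 2 powr ((real k + 1) * s)" .
    have "norm z < 2 powr (- real k)" using zt k2 by simp
    then have B: "z \<in> ball 0 (1 / 2 ^ k)" by (simp add: powr_minus_divide powr_realpow)
    have "ennreal (norm z powr (-s)) \<le> ennreal (2 powr ((real k + 1) * s)) * indicator (ball 0 (1 / 2 ^ k)) z"
      using A B by (simp add: ennreal_leI)
    also have "\<dots> \<le> ?c"
      by (rule ennreal_term_le_suminf[where f="\<lambda>k. ennreal (2 powr ((real k + 1) * s)) * indicator (ball 0 (1 / 2 ^ k)) z"])
    also have "?c \<le> ?a + ?b + ?c" by (simp add: add_increasing)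
    finally show ?thesis .
  qed
qed

lemma inner_bound:
  fixes E :: "'a::euclidean_space set" and x :: 'a and s R :: real
  assumes E: "E \<in> sets lebesgue" and s: "s > 0" and R: "R \<ge> 1"
  shows "(\<integral>\<^sup>+y. ennreal (indicator E y * norm (y - x) powr (-s)) \<partial>lebesgue)
     \<le> ennreal (R powr (-s)) * emeasure lebesgue E + emeasure lebesgue (E \<inter> ball x R)
       + (\<Sum>k. ennreal (2 powr ((real k + 1) * s)) * emeasure lebesgue (E \<inter> ball x (1 / 2 ^ k)))"
proof -
  have EB: "E \<inter> ball x r \<in> sets lebesgue" for r using E by (intro sets.Int) (auto intro: borel_open)
  have pw: "ennreal (indicator E y * norm (y - x) powr (-s)) \<le> ennreal (R powr (-s)) * indicator E y
      + indicator (E \<inter> ball x R) y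
      + (\<Sum>k. ennreal (2 powr ((real k + 1) * s)) * indicator (E \<inter> ball x (1 / 2 ^ k)) y)" for y
  proof (cases "y \<in> E")
    case True
    have ib: "indicator (ball 0 r) (y - x) = (indicator (E \<inter> ball x r) y :: ennreal)" for r
      using True by (simp add: indicator_def dist_norm norm_minus_commute)
    show ?thesis using kernel_pointwise[OF s R, of "y - x"] True by (simp add: ib)
  qed simp
  have "(\<integral>\<^sup>+y. ennreal (indicator E y * norm (y - x) powr (-s)) \<partial>lebesgue)
     \<le> (\<integral>\<^sup>+y. ennreal (R powr (-s)) * indicator E y
      + indicator (E \<inter> ball x R) y
      + (\<Sum>k. ennreal (2 powr ((real k + 1) * s)) * indicator (E \<inter> ball x (1 / 2 ^ k)) y) \<partial>lebesgue)"
    by (intro nn_integral_mono pw)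
  also have "\<dots> = (\<integral>\<^sup>+y. ennreal (R powr (-s)) * indicator E y \<partial>lebesgue)
      + (\<integral>\<^sup>+y. indicator (E \<inter> ball x R) y \<partial>lebesgue)
      + (\<integral>\<^sup>+y. (\<Sum>k. ennreal (2 powr ((real k + 1) * s)) * indicator (E \<inter> ball x (1 / 2 ^ k)) y) \<partial>lebesgue)"
    apply (subst nn_integral_add)
      apply (rule borel_measurable_add[OF borel_measurable_times_ennreal[OF borel_measurable_const borel_measurable_indicator[OF E]] borel_measurable_indicator[OF EB]])
     apply (rule borel_measurable_suminf_order)
     apply (rule borel_measurable_times_ennreal[OF borel_measurable_const borel_measurable_indicator[OF EB]])
    apply (subst nn_integral_add)
      apply (rule borel_measurable_times_ennreal[OF borel_measurable_const borel_measurable_indicator[OF E]])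
     apply (rule borel_measurable_indicator[OF EB])
    apply (rule refl)
    done
  also have "(\<integral>\<^sup>+y. (\<Sum>k. ennreal (2 powr ((real k + 1) * s)) * indicator (E \<inter> ball x (1 / 2 ^ k)) y) \<partial>lebesgue)
     = (\<Sum>k. ennreal (2 powr ((real k + 1) * s)) * emeasure lebesgue (E \<inter> ball x (1 / 2 ^ k)))"
    apply (subst nn_integral_suminf)
     apply (rule borel_measurable_times_ennreal[OF borel_measurable_const borel_measurable_indicator[OF EB]])
    apply (rule suminf_cong)
    apply (rule nn_integral_cmult_indicator[OF EB])
    done
  finally show ?thesis by (simp only: nn_integral_cmult_indicator[OF E] nn_integral_indicator[OF EB])
qed

lemma term_bound:
  fixes m \<xi> w \<alpha> :: real and N k :: nat
  assumes a: "0 < \<alpha>" "\<alpha> < real N" and m0: "0 \<le> m" and mx: "m \<le> \<xi>" and mw: "m \<le> w * (1 / 2 ^ k) ^ N"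
  shows "2 powr ((real k + 1) * (real N - \<alpha>)) * m
     \<le> 2 powr (real N - \<alpha>) * \<xi> powr (\<alpha> / (2 * N)) * w powr (1 - \<alpha> / (2 * N)) * (2 powr (- \<alpha> / 2)) ^ k"
proof -
  define \<theta> where "\<theta> = \<alpha> / (2 * N)"
  have th: "0 < \<theta>" "\<theta> < 1" using a by (auto simp: \<theta>_def field_simps)
  have pp: "(1 / 2 ^ k :: real) ^ N > 0" by simp
  have "0 \<le> w * (1 / 2 ^ k) ^ N" using m0 mw by linarith
  then have w0: "0 \<le> w" using pp by (simp add: zero_le_mult_iff)
  have e: "(1 / 2 ^ k :: real) ^ N = 2 powr (- (real k * real N))"
  proof -
    have "2 powr (real k * real N) = (2::real) ^ (k * N)"
      by (simp add: powr_realpow[symmetric])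
    then show ?thesis by (simp add: powr_minus_divide power_one_over power_mult)
  qed
  have mb: "m \<le> \<xi> powr \<theta> * (w * 2 powr (- (real k * real N))) powr (1 - \<theta>)"
  proof (cases "m = 0")
    case True then show ?thesis using w0 by simp
  next
    case False
    then have mp: "m > 0" using m0 by simp
    have "m = m powr \<theta> * m powr (1 - \<theta>)" using mp by (simp add: powr_add[symmetric])
    also have "\<dots> \<le> \<xi> powr \<theta> * (w * 2 powr (- (real k * real N))) powr (1 - \<theta>)"
      using mx mw e mp th by (intro mult_mono powr_mono2) auto
    finally show ?thesis .
  qed
  have "(w * 2 powr (- (real k * real N))) powr (1 - \<theta>) = w powr (1 - \<theta>) * 2 powr (- (real k * real N) * (1 - \<theta>))"
    using w0 by (simp add: powr_mult powr_powr)
  then have mb2: "m \<le> \<xi> powr \<theta> * w powr (1 - \<theta>) * 2 powr (- (real k * real N) * (1 - \<theta>))"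
    using mb by (simp add: mult.assoc)
  have "2 powr ((real k + 1) * (real N - \<alpha>)) * m \<le> 2 powr ((real k + 1) * (real N - \<alpha>)) * (\<xi> powr \<theta> * w powr (1 - \<theta>) * 2 powr (- (real k * real N) * (1 - \<theta>)))"
    by (intro mult_left_mono mb2) auto
  also have "\<dots> = \<xi> powr \<theta> * w powr (1 - \<theta>) * 2 powr ((real k + 1) * (real N - \<alpha>) + (- (real k * real N) * (1 - \<theta>)))"
    by (simp only: powr_add mult_ac)
  also have "(real k + 1) * (real N - \<alpha>) + (- (real k * real N) * (1 - \<theta>)) = (real N - \<alpha>) + real k * (- \<alpha> / 2)"
    using a by (simp add: \<theta>_def field_simps)
  also have "2 powr ((real N - \<alpha>) + real k * (- \<alpha> / 2)) = 2 powr (real N - \<alpha>) * (2 powr (- \<alpha> / 2)) ^ k"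
  proof -
    have "(2 powr (-\<alpha>/2))^k = (2 powr (-\<alpha>/2)) powr (real k)" by (simp add: powr_realpow)
    also have "\<dots> = 2 powr (real k * (-\<alpha>/2))" by (simp add: powr_powr mult.commute)
    finally show ?thesis by (simp only: powr_add)
  qed
  finally show ?thesis by (simp add: \<theta>_def mult_ac)
qed

lemma series_bound:
  fixes m :: "nat \<Rightarrow> real" and \<xi> w \<alpha> :: real and N :: nat
  assumes a: "0 < \<alpha>" "\<alpha> < real N" and m0: "\<And>k. 0 \<le> m k" and mx: "\<And>k. m k \<le> \<xi>"
    and mw: "\<And>k. m k \<le> w * (1 / 2 ^ k) ^ N"
  shows "(\<Sum>k. ennreal (2 powr ((real k + 1) * (real N - \<alpha>))) * ennreal (m k))
    \<le> ennreal (2 powr (real N - \<alpha>) * \<xi> powr (\<alpha> / (2 * N)) * w powr (1 - \<alpha> / (2 * N)) / (1 - 2 powr (- \<alpha> / 2)))"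
proof -
  define C where "C = 2 powr (real N - \<alpha>) * \<xi> powr (\<alpha> / (2 * N)) * w powr (1 - \<alpha> / (2 * N))"
  define q :: real where "q = 2 powr (- \<alpha> / 2)"
  have "q < 2 powr 0" unfolding q_def using a by (intro powr_less_mono) auto
  then have q: "0 \<le> q" "q < 1" by (auto simp: q_def)
  have C0: "0 \<le> C" by (simp add: C_def)
  have "(\<Sum>k. ennreal (2 powr ((real k + 1) * (real N - \<alpha>))) * ennreal (m k))
      = (\<Sum>k. ennreal (2 powr ((real k + 1) * (real N - \<alpha>)) * m k))"
    using m0 by (intro suminf_cong) (simp add: ennreal_mult)
  also have "\<dots> \<le> (\<Sum>k. ennreal (C * q ^ k))"
    using term_bound[OF a m0 mx mw] by (intro suminf_le summableI ennreal_leI) (simp add: C_def q_def)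
  also have "\<dots> = ennreal (\<Sum>k. C * q ^ k)"
    using q C0 by (intro suminf_ennreal2) (auto intro!: summable_mult summable_geometric)
  also have "(\<Sum>k. C * q ^ k) = C / (1 - q)"
    using q by (simp add: suminf_mult suminf_geometric summable_geometric divide_simps)
  finally show ?thesis by (simp add: C_def q_def)
qed

lemma ball_measure_bound:
  fixes A :: "(real ^ 'n) set"
  assumes A: "A \<in> sets lebesgue" and sub: "A \<subseteq> ball c r" and r: "r \<ge> 0"
  shows "emeasure lebesgue A = ennreal (measure lebesgue A)"
    and "measure lebesgue A \<le> unit_ball_vol (real CARD('n)) * r ^ CARD('n)"
proof -
  have le: "emeasure lebesgue A \<le> ennreal (unit_ball_vol (real CARD('n)) * r ^ CARD('n))"
    using emeasure_mono[OF sub, of lebesgue] r emeasure_ball[OF r, of c] by (simp add: borel_open)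
  then have "emeasure lebesgue A \<noteq> top" by (auto simp: top_unique)
  then show e: "emeasure lebesgue A = ennreal (measure lebesgue A)" by (rule emeasure_eq_ennreal_measure)
  show "measure lebesgue A \<le> unit_ball_vol (real CARD('n)) * r ^ CARD('n)"
    using le r by (simp add: e)
qed

lemma inner_total:
  fixes E :: "(real ^ 'n) set" and x :: "real ^ 'n" and \<alpha> R \<xi> M :: real
  assumes E: "E \<in> sets lebesgue" and Ew: "emeasure lebesgue E \<le> ennreal (unit_ball_vol (real CARD('n)))"
    and a: "0 < \<alpha>" "\<alpha> < real CARD('n)" and R: "R \<ge> 1" and \<xi>: "\<xi> \<ge> 0"
    and loc: "\<And>a. emeasure lebesgue (E \<inter> ball a 1) \<le> ennreal \<xi>"
    and cov: "emeasure lebesgue (E \<inter> ball x R) \<le> ennreal M" and M0: "M \<ge> 0"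
  shows "(\<integral>\<^sup>+y. ennreal (indicator E y * norm (y - x) powr (- (real CARD('n) - \<alpha>))) \<partial>lebesgue)
     \<le> ennreal (R powr (- (real CARD('n) - \<alpha>)) * unit_ball_vol (real CARD('n)) + M
          + 2 powr (real CARD('n) - \<alpha>) * \<xi> powr (\<alpha> / (2 * CARD('n)))
              * unit_ball_vol (real CARD('n)) powr (1 - \<alpha> / (2 * CARD('n))) / (1 - 2 powr (- \<alpha> / 2)))"
proof -
  define w where "w = unit_ball_vol (real CARD('n))"
  have w0: "w \<ge> 0" by (simp add: w_def)
  define m where "m k = measure lebesgue (E \<inter> ball x (1 / 2 ^ k))" for k
  have EB: "E \<inter> ball x r \<in> sets lebesgue" for r using E by (intro sets.Int) (auto intro: borel_open)
  have em: "emeasure lebesgue (E \<inter> ball x (1 / 2 ^ k)) = ennreal (m k)" for k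
    unfolding m_def by (rule ball_measure_bound(1)[OF EB]) auto
  have m0: "0 \<le> m k" for k by (simp add: m_def)
  have mw: "m k \<le> w * (1 / 2 ^ k) ^ CARD('n)" for k
    unfolding m_def w_def by (rule ball_measure_bound(2)[OF EB]) auto
  have mx: "m k \<le> \<xi>" for k
  proof -
    have "ennreal (m k) \<le> emeasure lebesgue (E \<inter> ball x 1)"
      unfolding em[symmetric] using EB subset_ball[of "1 / 2 ^ k" 1 x]
      by (intro emeasure_mono) auto
    also have "\<dots> \<le> ennreal \<xi>" by (rule loc)
    finally show ?thesis using \<xi> by simp
  qed
  have S: "(\<Sum>k. ennreal (2 powr ((real k + 1) * (real CARD('n) - \<alpha>))) * emeasure lebesgue (E \<inter> ball x (1 / 2 ^ k)))
     \<le> ennreal (2 powr (real CARD('n) - \<alpha>) * \<xi> powr (\<alpha> / (2 * CARD('n))) * w powr (1 - \<alpha> / (2 * CARD('n))) / (1 - 2 powr (- \<alpha> / 2)))"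
    unfolding em using series_bound[OF a m0 mx mw] by simp
  have s: "real CARD('n) - \<alpha> > 0" using a by simp
  have "(\<integral>\<^sup>+y. ennreal (indicator E y * norm (y - x) powr (- (real CARD('n) - \<alpha>))) \<partial>lebesgue)
     \<le> ennreal (R powr (- (real CARD('n) - \<alpha>))) * emeasure lebesgue E + emeasure lebesgue (E \<inter> ball x R)
       + (\<Sum>k. ennreal (2 powr ((real k + 1) * (real CARD('n) - \<alpha>))) * emeasure lebesgue (E \<inter> ball x (1 / 2 ^ k)))"
    by (rule inner_bound[OF E s R])
  also have "\<dots> \<le> ennreal (R powr (- (real CARD('n) - \<alpha>))) * ennreal w + ennreal M
     + ennreal (2 powr (real CARD('n) - \<alpha>) * \<xi> powr (\<alpha> / (2 * CARD('n))) * w powr (1 - \<alpha> / (2 * CARD('n))) / (1 - 2 powr (- \<alpha> / 2)))"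
    using Ew cov S unfolding w_def by (intro add_mono mult_left_mono) auto
  also have "\<dots> = ennreal (R powr (- (real CARD('n) - \<alpha>)) * w + M
          + 2 powr (real CARD('n) - \<alpha>) * \<xi> powr (\<alpha> / (2 * CARD('n)))
              * w powr (1 - \<alpha> / (2 * CARD('n))) / (1 - 2 powr (- \<alpha> / 2)))"
  proof -
    have "2 powr (- \<alpha> / 2) < 2 powr 0" using a by (intro powr_less_mono) auto
    then have q: "0 < 1 - 2 powr (- \<alpha> / 2)" by simp
    show ?thesis using q w0 M0
      by (simp add: ennreal_mult[symmetric] ennreal_plus[symmetric] del: ennreal_plus)
  qed
  finally show ?thesis by (simp add: w_def)
qed

lemma cover_finite:
  fixes R :: real
  obtains C :: "'a::euclidean_space set" where "finite C" "\<And>x. ball x R \<subseteq> (\<Union>c\<in>C. ball (x + c) 1)"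
proof -
  have cpt: "compact (cball (0::'a) R)" by simp
  have sub: "cball (0::'a) R \<subseteq> (\<Union>c\<in>cball 0 R. ball c 1)" by force
  obtain C :: "'a set" where C: "C \<subseteq> cball 0 R" "finite C" "cball 0 R \<subseteq> (\<Union>c\<in>C. ball c 1)"
    apply (rule compactE_image[OF cpt _ sub])
     apply simp
    apply blast
    done
  have "ball x R \<subseteq> (\<Union>c\<in>C. ball (x + c) 1)" for x
  proof
    fix y assume "y \<in> ball x R"
    then have "y - x \<in> cball 0 R" by (simp add: dist_norm norm_minus_commute)
    then obtain c where "c \<in> C" "dist c (y - x) < 1" using C(3) by auto
    moreover have "dist (x + c) y = dist c (y - x)" by (simp add: dist_norm algebra_simps)
    ultimately show "y \<in> (\<Union>c\<in>C. ball (x + c) 1)" by (auto intro!: bexI[of _ c])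
  qed
  then show ?thesis using C(2) that by blast
qed

lemma cov_measure:
  fixes E :: "'a::euclidean_space set"
  assumes E: "E \<in> sets lebesgue" and loc: "\<And>a. emeasure lebesgue (E \<inter> ball a 1) \<le> ennreal \<xi>"
    and \<xi>: "\<xi> \<ge> 0" and C: "finite C" "ball x R \<subseteq> (\<Union>c\<in>C. ball (x + c) 1)"
  shows "emeasure lebesgue (E \<inter> ball x R) \<le> ennreal (real (card C) * \<xi>)"
proof -
  have EB: "E \<inter> ball x r \<in> sets lebesgue" for x r using E by (intro sets.Int) (auto intro: borel_open)
  have "emeasure lebesgue (E \<inter> ball x R) \<le> emeasure lebesgue (\<Union>c\<in>C. E \<inter> ball (x + c) 1)"
  proof (rule emeasure_mono)
    show "(\<Union>c\<in>C. E \<inter> ball (x + c) 1) \<in> sets lebesgue" using EB C(1) by (intro sets.finite_UN) auto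
  qed (use C(2) in blast)
  also have "\<dots> \<le> (\<Sum>c\<in>C. emeasure lebesgue (E \<inter> ball (x + c) 1))"
    using EB C(1) by (intro emeasure_subadditive_finite) auto
  also have "\<dots> \<le> (\<Sum>c\<in>C. ennreal \<xi>)" by (intro sum_mono loc)
  also have "\<dots> = ennreal (real (card C) * \<xi>)" using \<xi> by (simp add: ennreal_mult ennreal_of_nat_eq_real_of_nat)
  finally show ?thesis .
qed

lemma local_from_asym:
  fixes E :: "(real ^ 'n) set" and \<xi> :: real
  assumes E: "E \<in> sets lebesgue" and Em: "emeasure lebesgue E = emeasure lebesgue (ball (0::real^'n) 1)"
    and as: "asym E \<ge> 2 * (measure lebesgue (ball (0::real^'n) 1) - \<xi>)"
  shows "emeasure lebesgue (E \<inter> ball a 1) \<le> ennreal \<xi>"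
proof -
  define w where "w = unit_ball_vol (real CARD('n))"
  have w0: "w \<ge> 0" by (simp add: w_def)
  have eball: "emeasure lebesgue (ball c 1) = ennreal w" for c :: "real^'n"
    using emeasure_ball[of 1 c] by (simp add: w_def)
  have mball: "measure lebesgue (ball c 1) = w" for c :: "real^'n"
    using eball[of c] w0 by (simp add: measure_def)
  have Ew: "emeasure lebesgue E = ennreal w" using Em eball by simp
  have mE: "measure lebesgue E = w" using Ew w0 by (simp add: measure_def)
  define A where "A = ball a 1"
  have A: "A \<in> sets lebesgue" unfolding A_def by (auto intro: borel_open)
  have fA: "emeasure lebesgue A \<noteq> \<infinity>" using eball by (simp add: A_def)
  have fE: "emeasure lebesgue E \<noteq> \<infinity>" using Ew by simp
  have AE: "A \<inter> E \<in> sets lebesgue" using A E by auto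
  have fAE: "emeasure lebesgue (A \<inter> E) \<noteq> \<infinity>"
    using emeasure_mono[of "A \<inter> E" A lebesgue] A fA by (auto simp: top_unique)
  have "asym E \<le> measure lebesgue ((ball a 1 - E) \<union> (E - ball a 1))"
    unfolding asym_def by (rule cINF_lower) (auto intro!: bdd_belowI[where m=0])
  also have "\<dots> = measure lebesgue (A - (A \<inter> E)) + measure lebesgue (E - (A \<inter> E))"
    unfolding A_def[symmetric]
    apply (subst measure_Union)
    using A E fA fE emeasure_mono[of "A - E" A lebesgue] emeasure_mono[of "E - A" E lebesgue]
    by (auto simp: top_unique Diff_Int2 intro!: arg_cong2[where f="(+)"] arg_cong[where f="measure lebesgue"])
  also have "\<dots> = 2 * w - 2 * measure lebesgue (A \<inter> E)"
    using A E AE fA fE by (simp add: measure_Diff mE mball A_def)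
  finally have "measure lebesgue (A \<inter> E) \<le> \<xi>" using as mball[of 0] by simp
  moreover have "emeasure lebesgue (E \<inter> A) = ennreal (measure lebesgue (A \<inter> E))"
    using fAE by (simp add: emeasure_eq_ennreal_measure Int_commute)
  ultimately show ?thesis unfolding A_def by (metis ennreal_leI)
qed



lemma outer_upper:
  fixes E :: "'a::euclidean_space set" and K :: "'a \<Rightarrow> 'a \<Rightarrow> real"
  assumes E: "E \<in> sets lebesgue"
    and inn: "\<And>x. x \<in> E \<Longrightarrow> (\<integral>\<^sup>+y. ennreal (indicator E y * K x y) \<partial>lebesgue) \<le> ennreal U"
  shows "(\<integral>\<^sup>+x. \<integral>\<^sup>+y. ennreal (indicator E x * indicator E y * K x y) \<partial>lebesgue \<partial>lebesgue)
     \<le> ennreal U * emeasure lebesgue E"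
proof -
  have "(\<integral>\<^sup>+x. \<integral>\<^sup>+y. ennreal (indicator E x * indicator E y * K x y) \<partial>lebesgue \<partial>lebesgue)
     \<le> (\<integral>\<^sup>+x. ennreal U * indicator E x \<partial>lebesgue)"
  proof (intro nn_integral_mono)
    fix x show "(\<integral>\<^sup>+y. ennreal (indicator E x * indicator E y * K x y) \<partial>lebesgue) \<le> ennreal U * indicator E x"
      using inn[of x] by (cases "x \<in> E") auto
  qed
  also have "\<dots> = ennreal U * emeasure lebesgue E" by (rule nn_integral_cmult_indicator[OF E])
  finally show ?thesis .
qed

lemma outer_lower:
  fixes E :: "'a::euclidean_space set" and K :: "'a \<Rightarrow> 'a \<Rightarrow> real"
  assumes E: "E \<in> sets lebesgue"
    and inn: "\<And>x. x \<in> E \<Longrightarrow> ennreal L \<le> (\<integral>\<^sup>+y. ennreal (indicator E y * K x y) \<partial>lebesgue)"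
  shows "ennreal L * emeasure lebesgue E \<le> (\<integral>\<^sup>+x. \<integral>\<^sup>+y. ennreal (indicator E x * indicator E y * K x y) \<partial>lebesgue \<partial>lebesgue)"
proof -
  have "ennreal L * emeasure lebesgue E = (\<integral>\<^sup>+x. ennreal L * indicator E x \<partial>lebesgue)"
    by (rule nn_integral_cmult_indicator[OF E, symmetric])
  also have "\<dots> \<le> (\<integral>\<^sup>+x. \<integral>\<^sup>+y. ennreal (indicator E x * indicator E y * K x y) \<partial>lebesgue \<partial>lebesgue)"
  proof (intro nn_integral_mono)
    fix x show "ennreal L * indicator E x \<le> (\<integral>\<^sup>+y. ennreal (indicator E x * indicator E y * K x y) \<partial>lebesgue)"
      using inn[of x] by (cases "x \<in> E") auto
  qed
  finally show ?thesis .
qed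

lemma inner_lower_ball:
  fixes x :: "'a::euclidean_space" and s :: real
  assumes x: "x \<in> ball 0 1" and s: "s > 0"
  shows "ennreal (2 powr (-s)) * emeasure lebesgue (ball (0::'a) 1)
    \<le> (\<integral>\<^sup>+y. ennreal (indicator (ball 0 1) y * norm (y - x) powr (-s)) \<partial>lebesgue)"
proof -
  have Bm: "ball (0::'a) 1 \<in> sets lebesgue" by (auto intro: borel_open)
  have BD: "ball (0::'a) 1 - {x} \<in> sets lebesgue" using Bm by auto
  have "ennreal (2 powr (-s)) * emeasure lebesgue (ball (0::'a) 1) = ennreal (2 powr (-s)) * emeasure lebesgue (ball (0::'a) 1 - {x})"
    using Bm by (subst emeasure_Diff_null_set) auto
  also have "\<dots> = (\<integral>\<^sup>+y. ennreal (2 powr (-s)) * indicator (ball 0 1 - {x}) y \<partial>lebesgue)"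
    by (rule nn_integral_cmult_indicator[OF BD, symmetric])
  also have "\<dots> \<le> (\<integral>\<^sup>+y. ennreal (indicator (ball 0 1) y * norm (y - x) powr (-s)) \<partial>lebesgue)"
  proof (intro nn_integral_mono)
    fix y :: 'a
    show "ennreal (2 powr (-s)) * indicator (ball 0 1 - {x}) y \<le> ennreal (indicator (ball 0 1) y * norm (y - x) powr (-s))"
    proof (cases "y \<in> ball 0 1 - {x}")
      case True
      have "norm (y - x) \<le> norm y + norm x" by (rule norm_triangle_ineq4)
      also have "\<dots> \<le> 2" using True x by auto
      finally have le2: "norm (y - x) \<le> 2" .
      have "0 < norm (y - x)" using True by auto
      then have "2 powr (-s) \<le> norm (y - x) powr (-s)" using le2 s by (intro powr_mono2') auto
      then show ?thesis using True by (simp add: ennreal_leI)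
    qed simp
  qed
  finally show ?thesis .
qed

theorem lemma2p7:
  fixes \<alpha> :: real
  assumes "CARD('n::finite) \<ge> 2" and "1 < \<alpha>" and "\<alpha> < real CARD('n)"
  shows "\<exists>\<xi>>0. \<forall>E :: (real ^ 'n) set.
           E \<in> sets lebesgue \<and> emeasure lebesgue E = emeasure lebesgue (ball (0::real^'n) 1)
           \<and> asym E \<ge> 2 * (measure lebesgue (ball (0::real^'n) 1) - \<xi>)
           \<longrightarrow> deficit \<alpha> E > (measure lebesgue (ball (0::real^'n) 1))\<^sup>2 / 5 ^ CARD('n)
                 * (1 - 1 / 2 powr (real CARD('n) - \<alpha>))"
proof -
  let ?p = "real CARD('n) - \<alpha>"
  let ?w = "unit_ball_vol (real CARD('n))"
  let ?B = "ball (0::real^'n) 1"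
  let ?\<theta> = "\<alpha> / (2 * CARD('n))"
  let ?q = "2 powr (- \<alpha> / 2) :: real"
  have a: "0 < \<alpha>" "\<alpha> < real CARD('n)" using assms by auto
  have p: "?p > 0" using a by simp
  have w: "?w > 0" by simp
  have eball: "emeasure lebesgue (ball c 1) = ennreal ?w" for c :: "real^'n"
    using emeasure_ball[of 1 c] by simp
  have mB: "measure lebesgue ?B = ?w" using eball[of 0] w by (simp add: measure_def)
  have Bm: "?B \<in> sets lebesgue" by (auto intro: borel_open)
  have "?q < 2 powr 0" using a by (intro powr_less_mono) auto
  then have q: "0 < 1 - ?q" by simp
  define T where "T = ?w\<^sup>2 / 5 ^ CARD('n) * (1 - 1 / 2 powr ?p)"
  define L where "L = 2 powr (- ?p) * ?w * ?w"
  have TL: "T < L"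
  proof -
    have "2 powr ?p < 2 powr (real CARD('n))" using a by (intro powr_less_mono) auto
    also have "\<dots> = 2 ^ CARD('n)" by (simp add: powr_realpow)
    also have "\<dots> \<le> 5 ^ CARD('n)" by (intro power_mono) auto
    finally have h: "2 powr ?p < 5 ^ CARD('n)" .
    have "0 < 2 powr ?p" by simp
    then have h1: "1 - 1 / 2 powr ?p \<le> 1" by simp
    have T1: "T \<le> ?w\<^sup>2 / 5 ^ CARD('n)"
      unfolding T_def using h1 w by (intro mult_left_le) auto
    have w2: "?w\<^sup>2 > 0" by (rule zero_less_power[OF w])
    have "?w\<^sup>2 / 5 ^ CARD('n) < ?w\<^sup>2 / 2 powr ?p" using h w2 by (intro divide_strict_left_mono) auto
    also have "?w\<^sup>2 / 2 powr ?p = L" unfolding L_def powr_minus_divide by (simp add: power2_eq_square)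
    finally show ?thesis using T1 by simp
  qed
  define gap where "gap = L - T"
  have gap: "gap > 0" using TL by (simp add: gap_def)
  define S where "S \<xi> = 2 powr ?p * \<xi> powr ?\<theta> * ?w powr (1 - ?\<theta>) / (1 - ?q)" for \<xi>
  have S0: "S \<xi> \<ge> 0" for \<xi> unfolding S_def using q by simp
  have B_inner_low: "ennreal (2 powr (- ?p) * ?w) \<le> (\<integral>\<^sup>+y. ennreal (indicator ?B y * norm (y - x) powr (- ?p)) \<partial>lebesgue)"
    if "x \<in> ?B" for x
    using inner_lower_ball[OF that p] eball[of 0] by (simp add: ennreal_mult)
  have FB_low: "ennreal L \<le> (\<integral>\<^sup>+x. \<integral>\<^sup>+y. ennreal (indicator ?B x * indicator ?B y * norm (y - x) powr (- ?p)) \<partial>lebesgue \<partial>lebesgue)"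
    using outer_lower[OF Bm B_inner_low] eball[of 0] w by (simp add: L_def ennreal_mult)
  have B_inner_up: "(\<integral>\<^sup>+y. ennreal (indicator ?B y * norm (y - x) powr (- ?p)) \<partial>lebesgue)
      \<le> ennreal (1 powr (- ?p) * ?w + ?w + S ?w)" for x
  proof -
    have le: "emeasure lebesgue (?B \<inter> ball c 1) \<le> ennreal ?w" for c
      using emeasure_mono[of "?B \<inter> ball c 1" "ball c 1" lebesgue] eball[of c] by (auto intro: borel_open)
    show ?thesis
      using inner_total[OF Bm _ a order.refl _ le le, of x] eball[of 0] w by (simp add: S_def)
  qed
  have FB_up: "(\<integral>\<^sup>+x. \<integral>\<^sup>+y. ennreal (indicator ?B x * indicator ?B y * norm (y - x) powr (- ?p)) \<partial>lebesgue \<partial>lebesgue)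
      \<le> ennreal ((1 powr (- ?p) * ?w + ?w + S ?w) * ?w)"
    using outer_upper[OF Bm B_inner_up] eball[of 0] w S0[of ?w] by (simp add: ennreal_mult)
  have FB: "L \<le> rieszF \<alpha> ?B"
  proof -
    have "enn2real (ennreal L) \<le> rieszF \<alpha> ?B"
      unfolding rieszF_def by (rule enn2real_mono[OF FB_low le_less_trans[OF FB_up ennreal_less_top]])
    then show ?thesis using w by (simp add: L_def)
  qed
  have "((\<lambda>R. R powr (- ?p) * ?w * ?w) \<longlongrightarrow> 0 * ?w * ?w) at_top"
    using p by (intro tendsto_mult tendsto_const tendsto_neg_powr filterlim_ident) auto
  then have "eventually (\<lambda>R. R powr (- ?p) * ?w * ?w < gap / 2) at_top"
    using gap by (intro order_tendstoD(2)) auto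
  then obtain R0 where R0: "\<And>R. R \<ge> R0 \<Longrightarrow> R powr (- ?p) * ?w * ?w < gap / 2"
    by (auto simp: eventually_at_top_linorder)
  define R where "R = max 1 R0"
  have R1: "R \<ge> 1" and Rg: "R powr (- ?p) * ?w * ?w < gap / 2" using R0[of R] by (auto simp: R_def)
  obtain C :: "(real^'n) set" where C: "finite C" "\<And>x. ball x R \<subseteq> (\<Union>c\<in>C. ball (x + c) 1)"
    by (rule cover_finite[of R]) blast
  define g where "g \<xi> = (real (card C) * \<xi> + S \<xi>) * ?w" for \<xi>
  have th: "?\<theta> > 0" using a by simp
  have pw0: "((\<lambda>\<xi>::real. \<xi> powr ?\<theta>) \<longlongrightarrow> 0) (at_right 0)"
    apply (rule tendsto_zero_powrI)
       apply (rule tendsto_ident_at)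
      apply (rule tendsto_const)
     apply (rule eventually_mono[OF eventually_at_right_less])
     apply simp
    apply (rule th)
    done
  have "(g \<longlongrightarrow> (real (card C) * 0 + 2 powr ?p * 0 * ?w powr (1 - ?\<theta>) / (1 - ?q)) * ?w) (at_right 0)"
    unfolding g_def S_def using q
    by (intro tendsto_mult tendsto_add tendsto_divide pw0 tendsto_const tendsto_ident_at) auto
  then have "(g \<longlongrightarrow> 0) (at_right 0)" by simp
  then have "eventually (\<lambda>\<xi>. g \<xi> < gap / 2) (at_right 0)"
    using gap by (intro order_tendstoD(2)) auto
  then obtain b where b: "b > 0" "\<And>y. y > 0 \<Longrightarrow> y < b \<Longrightarrow> g y < gap / 2"
    by (auto simp: eventually_at_right[of 0 1])
  define \<xi> where "\<xi> = b / 2"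
  have \<xi>: "\<xi> > 0" "g \<xi> < gap / 2" using b by (auto simp: \<xi>_def)
  show ?thesis
  proof (intro exI[of _ \<xi>] conjI allI impI \<xi>(1))
    fix E :: "(real^'n) set"
    assume hE: "E \<in> sets lebesgue \<and> emeasure lebesgue E = emeasure lebesgue ?B
           \<and> asym E \<ge> 2 * (measure lebesgue ?B - \<xi>)"
    then have E: "E \<in> sets lebesgue" and Em: "emeasure lebesgue E = emeasure lebesgue ?B"
      and as: "asym E \<ge> 2 * (measure lebesgue ?B - \<xi>)" by auto
    have loc: "emeasure lebesgue (E \<inter> ball c 1) \<le> ennreal \<xi>" for c
      by (rule local_from_asym[OF E Em as])
    have Ew: "emeasure lebesgue E = ennreal ?w" using Em eball by simp
    have cov: "emeasure lebesgue (E \<inter> ball x R) \<le> ennreal (real (card C) * \<xi>)" for x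
      by (rule cov_measure[OF E loc _ C(1) C(2)]) (use \<xi> in simp)
    have inn: "(\<integral>\<^sup>+y. ennreal (indicator E y * norm (y - x) powr (- ?p)) \<partial>lebesgue)
       \<le> ennreal (R powr (- ?p) * ?w + real (card C) * \<xi> + S \<xi>)" for x
      using inner_total[OF E _ a R1 _ loc cov, of x] Ew \<xi> by (simp add: S_def)
    have FE_up: "(\<integral>\<^sup>+x. \<integral>\<^sup>+y. ennreal (indicator E x * indicator E y * norm (y - x) powr (- ?p)) \<partial>lebesgue \<partial>lebesgue)
      \<le> ennreal ((R powr (- ?p) * ?w + real (card C) * \<xi> + S \<xi>) * ?w)"
      using outer_upper[OF E inn] Ew w S0[of \<xi>] \<xi> by (simp add: ennreal_mult)
    have "rieszF \<alpha> E \<le> enn2real (ennreal ((R powr (- ?p) * ?w + real (card C) * \<xi> + S \<xi>) * ?w))"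
      unfolding rieszF_def using FE_up by (intro enn2real_mono) auto
    also have "\<dots> = (R powr (- ?p) * ?w + real (card C) * \<xi> + S \<xi>) * ?w"
      using w S0[of \<xi>] \<xi> by (intro enn2real_ennreal mult_nonneg_nonneg add_nonneg_nonneg) auto
    also have "\<dots> = R powr (- ?p) * ?w * ?w + g \<xi>"
      by (simp add: g_def algebra_simps)
    finally have FE: "rieszF \<alpha> E < gap" using Rg \<xi>(2) by simp
    show "deficit \<alpha> E > (measure lebesgue ?B)\<^sup>2 / 5 ^ CARD('n) * (1 - 1 / 2 powr ?p)"
      using FB FE unfolding deficit_def mB T_def[symmetric] gap_def by simp
  qed
qed

end
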